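(* Let $\mathcal B$ be the category with one object whose only endomorphisms are the identity $i$ and an idempotent $e\ne i$ (so $e\circ e=i\circ e=e\circ i=e$). Let $\mathcal E$ have objects $\mathbb N\cup\{\infty\}$ (with the usual order and $\infty$ largest) and hom-sets $\mathcal E(X,Y)=\{i,e\}$ if $X\le Y$, $\mathcal E(X,Y)=\{e\}$ if $Y<X<\infty$, $\mathcal E(X,Y)=\varnothing$ if $X=\infty$ and $Y<\infty$, with composition as in $\mathcal B$, and let $|\text{-}|:\mathcal E\to\mathcal B$ be the identity on morphisms. Then $\mathcal E$ is a concrete category over $\mathcal B$, and the $\mathcal Q_{\mathcal B}$-category $\overline{\mathcal E}$ is tensored and order-complete but not conically cocomplete.
   Context: For a concrete category (faithful functor $|\text{-}|:\mathcal E\to\mathcal B$), $\overline{\mathcal E}(X,Y)$ is the set of maps $|X|\to|Y|$ of the form $|f'|$, $f':X\to Y$. For subsets $\mathbf f\subseteq\mathcal B(S,T)$, $\mathbf h\subseteq\mathcal B(S,U)$ put $\mathbf h\swarrow\mathbf f=\{g\mid\forall f\in\mathbf f: g\circ f\in\mathbf h\}$. $\overline{\mathcal E}$ is tensored if for every $X$ and every subset $\mathbf u\subseteq\mathcal B(|X|,T)$ there is $Y$ with $|Y|=T$ and $\overline{\mathcal E}(Y,Z)=\overline{\mathcal E}(X,Z)\swarrow\mathbf u$ for all $Z$. The fibre $\mathcal E_T$ is the class of $Y$ with $|Y|=T$ preordered by $Y\le Y'$ iff $1_T\in\overline{\mathcal E}(Y,Y')$; $\overline{\mathcal E}$ is order-complete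 if every fibre has joins of all subclasses. A presheaf of extent $T$ is a family $\varphi_X\subseteq\mathcal B(|X|,T)$ with $\varphi_X\circ\overline{\mathcal E}(X',X)\subseteq\varphi_{X'}$; a supremum is $Y$ with $|Y|=T$ and $\overline{\mathcal E}(Y,Z)=\bigcap_X\overline{\mathcal E}(X,Z)\swarrow\varphi_X$ for all $Z$; $\overline{\mathcal E}$ is conically cocomplete if for every family $(Y_i)$ in a fibre $\mathcal E_T$ the presheaf $X\mapsto\bigcup_i\overline{\mathcal E}(X,Y_i)$ has a supremum. *)

theory Defs
  imports Main "HOL-Library.Extended_Nat"
begin

text \<open>The base category B is given by hom-sets Bhom S T (sets of morphisms of type 'm),
  composition cmp g f (meaning g after f) and identities ident S.
  A concrete category E over B is given by its objects (type 'o), the underlying-object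
  map U (written |X|), and its hom-sets Ehom X Y, regarded as sets of B-morphisms
  (the faithful functor being the identity on morphisms); thus Ehom X Y is exactly
  the set overline-E(X,Y).\<close>

definition is_category :: "('b \<Rightarrow> 'b \<Rightarrow> 'm set) \<Rightarrow> ('m \<Rightarrow> 'm \<Rightarrow> 'm) \<Rightarrow> ('b \<Rightarrow> 'm) \<Rightarrow> bool" where
  "is_category Bhom cmp ident \<longleftrightarrow>
     (\<forall>S. ident S \<in> Bhom S S) \<and>
     (\<forall>S T V f g. f \<in> Bhom S T \<longrightarrow> g \<in> Bhom T V \<longrightarrow> cmp g f \<in> Bhom S V) \<and>
     (\<forall>S T V W f g h. f \<in> Bhom S T \<longrightarrow> g \<in> Bhom T V \<longrightarrow> h \<in> Bhom V W \<longrightarrow>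
         cmp h (cmp g f) = cmp (cmp h g) f) \<and>
     (\<forall>S T f. f \<in> Bhom S T \<longrightarrow> cmp (ident T) f = f \<and> cmp f (ident S) = f)"

definition is_concrete ::
  "('b \<Rightarrow> 'b \<Rightarrow> 'm set) \<Rightarrow> ('m \<Rightarrow> 'm \<Rightarrow> 'm) \<Rightarrow> ('b \<Rightarrow> 'm) \<Rightarrow> ('o \<Rightarrow> 'b) \<Rightarrow> ('o \<Rightarrow> 'o \<Rightarrow> 'm set) \<Rightarrow> bool" where
  "is_concrete Bhom cmp ident U Ehom \<longleftrightarrow>
     is_category Bhom cmp ident \<and>
     (\<forall>X Y. Ehom X Y \<subseteq> Bhom (U X) (U Y)) \<and>
     (\<forall>X. ident (U X) \<in> Ehom X X) \<and>
     (\<forall>X Y Z f g. f \<in> Ehom X Y \<longrightarrow> g \<in> Ehom Y Z \<longrightarrow> cmp g f \<in> Ehom X Z)"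

definition lift_div :: "('m \<Rightarrow> 'm \<Rightarrow> 'm) \<Rightarrow> 'm set \<Rightarrow> 'm set \<Rightarrow> 'm set \<Rightarrow> 'm set" where
  "lift_div cmp BTU h fs = {g \<in> BTU. \<forall>f\<in>fs. cmp g f \<in> h}"

definition tensored ::
  "('b \<Rightarrow> 'b \<Rightarrow> 'm set) \<Rightarrow> ('m \<Rightarrow> 'm \<Rightarrow> 'm) \<Rightarrow> ('o \<Rightarrow> 'b) \<Rightarrow> ('o \<Rightarrow> 'o \<Rightarrow> 'm set) \<Rightarrow> bool" where
  "tensored Bhom cmp U Ehom \<longleftrightarrow>
     (\<forall>X T u. u \<subseteq> Bhom (U X) T \<longrightarrow>
        (\<exists>Y. U Y = T \<and> (\<forall>Z. Ehom Y Z = lift_div cmp (Bhom T (U Z)) (Ehom X Z) u)))"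

definition fibre_le :: "('b \<Rightarrow> 'm) \<Rightarrow> ('o \<Rightarrow> 'b) \<Rightarrow> ('o \<Rightarrow> 'o \<Rightarrow> 'm set) \<Rightarrow> 'b \<Rightarrow> 'o \<Rightarrow> 'o \<Rightarrow> bool" where
  "fibre_le ident U Ehom T Y Y' \<longleftrightarrow> ident T \<in> Ehom Y Y'"

definition order_complete ::
  "('b \<Rightarrow> 'm) \<Rightarrow> ('o \<Rightarrow> 'b) \<Rightarrow> ('o \<Rightarrow> 'o \<Rightarrow> 'm set) \<Rightarrow> bool" where
  "order_complete ident U Ehom \<longleftrightarrow>
     (\<forall>T S. S \<subseteq> {Y. U Y = T} \<longrightarrow>
        (\<exists>J. U J = T \<and>
             (\<forall>Y'. U Y' = T \<longrightarrow>
                (fibre_le ident U Ehom T J Y' \<longleftrightarrow> (\<forall>Y\<in>S. fibre_le ident U Ehom T Y Y')))))"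

definition presheaf ::
  "('b \<Rightarrow> 'b \<Rightarrow> 'm set) \<Rightarrow> ('m \<Rightarrow> 'm \<Rightarrow> 'm) \<Rightarrow> ('o \<Rightarrow> 'b) \<Rightarrow> ('o \<Rightarrow> 'o \<Rightarrow> 'm set) \<Rightarrow> 'b \<Rightarrow> ('o \<Rightarrow> 'm set) \<Rightarrow> bool" where
  "presheaf Bhom cmp U Ehom T \<phi> \<longleftrightarrow>
     (\<forall>X. \<phi> X \<subseteq> Bhom (U X) T) \<and>
     (\<forall>X X' f g. f \<in> \<phi> X \<longrightarrow> g \<in> Ehom X' X \<longrightarrow> cmp f g \<in> \<phi> X')"

definition is_supremum ::
  "('b \<Rightarrow> 'b \<Rightarrow> 'm set) \<Rightarrow> ('m \<Rightarrow> 'm \<Rightarrow> 'm) \<Rightarrow> ('o \<Rightarrow> 'b) \<Rightarrow> ('o \<Rightarrow> 'o \<Rightarrow> 'm set) \<Rightarrow> 'b \<Rightarrow> ('o \<Rightarrow> 'm set) \<Rightarrow> 'o \<Rightarrow> bool" where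
  "is_supremum Bhom cmp U Ehom T \<phi> Y \<longleftrightarrow>
     U Y = T \<and> (\<forall>Z. Ehom Y Z = (\<Inter>X. lift_div cmp (Bhom T (U Z)) (Ehom X Z) (\<phi> X)))"

text \<open>Families in a fibre are represented by their sets of members (the presheaf
  X \<mapsto> \<Union>_i Ebar(X,Y_i) only depends on the set {Y_i}).\<close>
definition conically_cocomplete ::
  "('b \<Rightarrow> 'b \<Rightarrow> 'm set) \<Rightarrow> ('m \<Rightarrow> 'm \<Rightarrow> 'm) \<Rightarrow> ('o \<Rightarrow> 'b) \<Rightarrow> ('o \<Rightarrow> 'o \<Rightarrow> 'm set) \<Rightarrow> bool" where
  "conically_cocomplete Bhom cmp U Ehom \<longleftrightarrow>
     (\<forall>T S. S \<subseteq> {Y. U Y = T} \<longrightarrow>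
        (\<exists>Y. is_supremum Bhom cmp U Ehom T (\<lambda>X. \<Union>Y'\<in>S. Ehom X Y') Y))"

datatype bmor = Bi | Be

definition Bhom_ex :: "unit \<Rightarrow> unit \<Rightarrow> bmor set" where
  "Bhom_ex S T = UNIV"

definition comp_ex :: "bmor \<Rightarrow> bmor \<Rightarrow> bmor" where
  "comp_ex g f = (if g = Bi \<and> f = Bi then Bi else Be)"

definition ident_ex :: "unit \<Rightarrow> bmor" where
  "ident_ex S = Bi"

definition U_ex :: "enat \<Rightarrow> unit" where
  "U_ex X = ()"

definition Ehom_ex :: "enat \<Rightarrow> enat \<Rightarrow> bmor set" where
  "Ehom_ex X Y =
     (if X \<le> Y then {Bi, Be}
      else if X < \<infinity> then {Be}   \<comment> \<open>Y < X < \<infinity>\<close>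
      else {})"

end

theory Submission
  imports Defs
begin

lemma Ehom_simp:
  "(Bi \<in> Ehom_ex X Y) = (X \<le> Y)"
  "(Be \<in> Ehom_ex X Y) = (X \<noteq> \<infinity> \<or> Y = \<infinity>)"
  unfolding Ehom_ex_def
  apply (simp split: if_split)
  apply (cases X; cases Y; simp)
  done

lemma bmor_UNIV: "(UNIV :: bmor set) = {Bi, Be}"
  using bmor.exhaust by auto

lemma set_eqI_bmor: "(Bi \<in> A \<longleftrightarrow> Bi \<in> B) \<Longrightarrow> (Be \<in> A \<longleftrightarrow> Be \<in> B) \<Longrightarrow> A = (B::bmor set)"
proof (rule set_eqI)
  fix x assume "Bi \<in> A \<longleftrightarrow> Bi \<in> B" "Be \<in> A \<longleftrightarrow> Be \<in> B"
  then show "x \<in> A \<longleftrightarrow> x \<in> B" by (cases x) auto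
qed

lemma conc: "is_concrete Bhom_ex comp_ex ident_ex U_ex Ehom_ex"
  unfolding is_concrete_def is_category_def Bhom_ex_def ident_ex_def
proof (intro conjI allI impI)
  fix S T V W :: unit and f g h :: bmor
  show "comp_ex h (comp_ex g f) = comp_ex (comp_ex h g) f" by (simp add: comp_ex_def)
next
  fix S T :: unit and f :: bmor
  show "comp_ex Bi f = f" "comp_ex f Bi = f" by (cases f; simp add: comp_ex_def)+
next
  fix X show "Bi \<in> Ehom_ex X X" by (simp add: Ehom_simp)
next
  fix X Y Z f g assume f: "f \<in> Ehom_ex X Y" and g: "g \<in> Ehom_ex Y Z"
  show "comp_ex g f \<in> Ehom_ex X Z"
  proof (cases "g = Bi \<and> f = Bi")
    case True thus ?thesis using f g by (simp add: comp_ex_def Ehom_simp)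
  next
    case False
    have "X \<noteq> \<infinity> \<or> Z = \<infinity>"
    proof (cases "X = \<infinity>")
      case True
      have "Y = \<infinity>" using f True by (cases f) (auto simp: Ehom_simp)
      thus ?thesis using g by (cases g) (auto simp: Ehom_simp)
    qed simp
    thus ?thesis using False unfolding comp_ex_def by (simp only: if_False Ehom_simp)
  qed
qed auto

lemma tens: "tensored Bhom_ex comp_ex U_ex Ehom_ex"
  unfolding tensored_def
proof (intro allI impI)
  fix X :: enat and T :: unit and u :: "bmor set"
  show "\<exists>Y. U_ex Y = T \<and> (\<forall>Z. Ehom_ex Y Z = lift_div comp_ex (Bhom_ex T (U_ex Z)) (Ehom_ex X Z) u)"
  proof (cases "Bi \<in> u")
    case True
    show ?thesis
      apply (rule exI[of _ X])
      apply (auto simp: U_ex_def lift_div_def Bhom_ex_def)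
      subgoal for Z g f using True by (cases g; cases f; cases X; cases Z; auto simp: comp_ex_def Ehom_simp)
      subgoal for Z g using True by (cases g) (auto simp: comp_ex_def)
      done
  next
    case False
    hence u: "u \<subseteq> {Be}" using bmor.exhaust by auto
    show ?thesis
    proof (cases "u = {}")
      case True
      show ?thesis
        apply (rule exI[of _ 0])
        using True bmor.exhaust by (auto simp: U_ex_def lift_div_def Bhom_ex_def Ehom_ex_def)
    next
      case False
      with u have u': "u = {Be}" by auto
      show ?thesis
      proof (cases "X = \<infinity>")
        case True
        have "\<forall>Z. Ehom_ex \<infinity> Z = lift_div comp_ex (Bhom_ex T (U_ex Z)) (Ehom_ex X Z) u"
        proof
          fix Z show "Ehom_ex \<infinity> Z = lift_div comp_ex (Bhom_ex T (U_ex Z)) (Ehom_ex X Z) u"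
            by (rule set_eqI_bmor; simp add: lift_div_def Bhom_ex_def u' comp_ex_def True Ehom_simp)
        qed
        thus ?thesis by (intro exI[of _ \<infinity>]) (simp add: U_ex_def)
      next
        case False
        have "\<forall>Z. Ehom_ex 0 Z = lift_div comp_ex (Bhom_ex T (U_ex Z)) (Ehom_ex X Z) u"
        proof
          fix Z show "Ehom_ex 0 Z = lift_div comp_ex (Bhom_ex T (U_ex Z)) (Ehom_ex X Z) u"
            by (rule set_eqI_bmor; simp add: lift_div_def Bhom_ex_def u' comp_ex_def False Ehom_simp)
        qed
        thus ?thesis by (intro exI[of _ 0]) (simp add: U_ex_def)
      qed
    qed
  qed
qed

lemma ocomp: "order_complete ident_ex U_ex Ehom_ex"
  unfolding order_complete_def fibre_le_def ident_ex_def
  apply (intro allI impI)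
  apply (rule exI[of _ "Sup S" for S])
  by (auto simp: Ehom_simp U_ex_def Sup_le_iff)

lemma notcc: "\<not> conically_cocomplete Bhom_ex comp_ex U_ex Ehom_ex"
proof
  assume cc: "conically_cocomplete Bhom_ex comp_ex U_ex Ehom_ex"
  have "range enat \<subseteq> {Y. U_ex Y = ()}" by (simp add: U_ex_def)
  with cc obtain Y where Y: "is_supremum Bhom_ex comp_ex U_ex Ehom_ex () (\<lambda>X. \<Union>Y'\<in>range enat. Ehom_ex X Y') Y"
    unfolding conically_cocomplete_def by blast
  hence eq: "\<And>Z. Ehom_ex Y Z = (\<Inter>X. lift_div comp_ex (Bhom_ex () (U_ex Z)) (Ehom_ex X Z) (\<Union>Y'\<in>range enat. Ehom_ex X Y'))"
    unfolding is_supremum_def by blast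
  show False
  proof (cases Y)
    case (enat n)
    have "Bi \<in> Ehom_ex Y Y" by (simp add: Ehom_simp)
    hence "Bi \<in> lift_div comp_ex (Bhom_ex () (U_ex Y)) (Ehom_ex (enat (Suc n)) Y) (\<Union>Y'\<in>range enat. Ehom_ex (enat (Suc n)) Y')"
      using eq[of Y] by blast
    moreover have "Bi \<in> Ehom_ex (enat (Suc n)) (enat (Suc n))" by (simp add: Ehom_simp)
    hence "Bi \<in> (\<Union>Y'\<in>range enat. Ehom_ex (enat (Suc n)) Y')" by blast
    ultimately have "comp_ex Bi Bi \<in> Ehom_ex (enat (Suc n)) Y" unfolding lift_div_def by blast
    thus False using enat by (simp add: comp_ex_def Ehom_simp)
  next
    case infinity
    have "Be \<in> lift_div comp_ex (Bhom_ex () (U_ex 0)) (Ehom_ex X 0) (\<Union>Y'\<in>range enat. Ehom_ex X Y')" for X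
    proof (cases X)
      case (enat m)
      thus ?thesis by (simp add: lift_div_def Bhom_ex_def comp_ex_def Ehom_simp)
    next
      case infinity
      have "(\<Union>Y'\<in>range enat. Ehom_ex X Y') = {}"
        using infinity by (auto simp: Ehom_ex_def)
      thus ?thesis by (simp add: lift_div_def Bhom_ex_def)
    qed
    hence "Be \<in> Ehom_ex Y 0" using eq[of 0] by blast
    thus False using infinity by (simp add: Ehom_simp)
  qed
qed

theorem mainTheorem6:
  shows "is_concrete Bhom_ex comp_ex ident_ex U_ex Ehom_ex
       \<and> tensored Bhom_ex comp_ex U_ex Ehom_ex
       \<and> order_complete ident_ex U_ex Ehom_ex
       \<and> \<not> conically_cocomplete Bhom_ex comp_ex U_ex Ehom_ex"
  using conc tens ocomp notcc by blast

end
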